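(* For every $k\ge1$, as polynomials in $j$, \begin{align*} \sigma_k(j)&=\frac{1}{2^kk!}j^{2k}-\frac{2k+1}{3\cdot2^k(k-1)!}j^{2k-1}+O(j^{2k-2}),\\ Q_k(j)&=\frac{(-1)^k}{2^kk!}j^{2k}+\frac{(-1)^k(2k-5)}{3\cdot2^k(k-1)!}j^{2k-1}+O(j^{2k-2}), \end{align*} where $O(j^{2k-2})$ denotes a polynomial in $j$ of degree at most $2k-2$.
   Context: For positive integers $j$: $\sigma_0(j)=1$, $\sigma_i(j)=\sum_{1\le n_1<\cdots<n_i\le j-1}n_1\cdots n_i$ for $1\le i\le j-1$, $\sigma_i(j)=0$ for $i\ge j$; $Q_0(j)=1$ and $Q_k(j)=-\sum_{i=1}^k\sigma_i(j)Q_{k-i}(j)$ for $k\ge1$. For each fixed $k$, $\sigma_k(j)$ and $Q_k(j)$ agree on all positive integers $j$ with polynomials in $j$ with rational coefficients, and are identified with these polynomials. *)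

theory Defs
  imports Main "HOL-Computational_Algebra.Polynomial"
begin

text \<open>sigma i j: elementary symmetric sum of degree i in 1, ..., j-1
  (sum over i-element subsets of {1..j-1} of the product of their elements).
  This gives 1 for i = 0 and 0 for i >= j, as in the paper.\<close>
definition sigma :: "nat \<Rightarrow> nat \<Rightarrow> rat" where
  "sigma i j = (\<Sum>S \<in> {S. S \<subseteq> {1..<j} \<and> card S = i}. \<Prod>n\<in>S. of_nat n)"

fun Q :: "nat \<Rightarrow> nat \<Rightarrow> rat" where
  "Q 0 j = 1"
| "Q (Suc k) j = - (\<Sum>i\<in>{1..Suc k}. sigma i j * Q (Suc k - i) j)"

end

theory Submission
  imports Defs "HOL-Computational_Algebra.Formal_Power_Series"
begin


lemma pcompose_power': "pcompose (p ^ n) r = (pcompose p r) ^ n"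
  by (induction n) (simp_all add: pcompose_mult pcompose_1)

lemma coeff_shift:
  fixes q :: "rat poly"
  assumes "degree q \<le> N"
  shows "coeff (pcompose q [:1,1:]) i = (\<Sum>m\<le>N. coeff q m * of_nat (m choose i))"
proof -
  have "pcompose q [:1,1:] = (\<Sum>m\<le>N. pcompose (monom (coeff q m) m) [:1,1:])"
    using poly_as_sum_of_monoms'[OF assms] pcompose_sum by metis
  also have "\<dots> = (\<Sum>m\<le>N. smult (coeff q m) ([:1,1:] ^ m))"
    by (simp add: monom_altdef pcompose_smult pcompose_power' pcompose_pCons)
  finally have "coeff (pcompose q [:1,1:]) i = (\<Sum>m\<le>N. coeff q m * coeff ([:1,1:] ^ m) i)"
    by (simp add: coeff_sum)
  also have "\<dots> = (\<Sum>m\<le>N. coeff q m * of_nat (m choose i))"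
  proof (rule sum.cong)
    fix m assume "m \<in> {..N}"
    show "coeff q m * coeff ([:1,1:] ^ m) i = coeff q m * of_nat (m choose i)"
    proof (cases "i \<le> m")
      case True thus ?thesis by (simp add: coeff_linear_poly_power)
    next
      case False
      hence "coeff ([:1,1:] ^ m) i = (0::rat)"
        by (intro coeff_eq_0) (simp add: degree_power_le[THEN le_less_trans] order.strict_trans1)
      thus ?thesis using False by simp
    qed
  qed simp
  finally show ?thesis .
qed

definition Dp :: "rat poly \<Rightarrow> rat poly" where
  "Dp q = pcompose q [:1,1:] - q"

lemma poly_Dp: "poly (Dp q) x = poly q (x + 1) - poly q x"
  by (simp add: Dp_def poly_pcompose add.commute)

lemma degree_shift_le: "degree (pcompose q [:1,1::rat:]) \<le> degree q"
  using degree_pcompose_le[of q "[:1,1:]"] by simp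

lemma Dp_linear: "Dp (a + b) = Dp a + Dp b"
  by (simp add: Dp_def pcompose_add)

lemma coeff_Dp:
  assumes "degree q \<le> N"
  shows "coeff (Dp q) i = (\<Sum>m\<le>N. coeff q m * of_nat (m choose i)) - coeff q i"
  using coeff_shift[OF assms] by (simp add: Dp_def)

lemma coeff_Dp_top:
  assumes "degree q \<le> Suc d"
  shows "coeff (Dp q) d = of_nat (Suc d) * coeff q (Suc d)"
proof -
  have "(\<Sum>m\<le>Suc d. coeff q m * of_nat (m choose d)) = 
        (\<Sum>m\<le>d. coeff q m * of_nat (m choose d)) + coeff q (Suc d) * of_nat (Suc d)"
    by simp
  also have "(\<Sum>m\<le>d. coeff q m * of_nat (m choose d)) = (\<Sum>m\<in>{d}. coeff q m * of_nat (m choose d))"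
    by (intro sum.mono_neutral_right) auto
  finally show ?thesis using coeff_Dp[OF assms, of d] by simp
qed

lemma coeff_Dp_second:
  assumes "degree q \<le> Suc (Suc d)"
  shows "coeff (Dp q) d = of_nat (Suc d) * coeff q (Suc d) + of_nat ((Suc (Suc d)) choose 2) * coeff q (Suc (Suc d))"
proof -
  have "(\<Sum>m\<le>Suc (Suc d). coeff q m * of_nat (m choose d)) = 
        (\<Sum>m\<le>d. coeff q m * of_nat (m choose d)) + coeff q (Suc d) * of_nat (Suc d)
          + coeff q (Suc (Suc d)) * of_nat (Suc (Suc d) choose d)"
    by simp
  also have "(\<Sum>m\<le>d. coeff q m * of_nat (m choose d)) = (\<Sum>m\<in>{d}. coeff q m * of_nat (m choose d))"
    by (intro sum.mono_neutral_right) auto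
  also have "Suc (Suc d) choose d = Suc (Suc d) choose 2"
    using binomial_symmetric[of d "Suc (Suc d)"] by simp
  finally show ?thesis using coeff_Dp[OF assms, of d] by (simp add: mult.commute)
qed

lemma degree_Dp_le: "degree q \<le> Suc d \<Longrightarrow> degree (Dp q) \<le> Suc d"
  unfolding Dp_def by (rule degree_diff_le) (use degree_shift_le order_trans in auto)

lemma degree_Dp_lt:
  assumes "degree q \<le> Suc d" shows "degree (Dp q) \<le> d"
proof (rule degree_le, intro allI impI)
  fix i assume i: "d < i"
  have z: "(\<Sum>m\<le>d. coeff q m * of_nat (m choose i)) = (0::rat)"
    by (intro sum.neutral) (use i in \<open>auto simp: binomial_eq_0\<close>)
  have "coeff (Dp q) i = (\<Sum>m\<le>d. coeff q m * of_nat (m choose i)) + coeff q (Suc d) * of_nat (Suc d choose i) - coeff q i"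
    using coeff_Dp[OF assms, of i] by simp
  also have "\<dots> = coeff q (Suc d) * of_nat (Suc d choose i) - coeff q i" using z by simp
  also have "\<dots> = 0"
  proof (cases "i = Suc d")
    case False
    hence "Suc d < i" using i by linarith
    thus ?thesis using assms by (simp add: binomial_eq_0 coeff_eq_0)
  qed simp
  finally show "coeff (Dp q) i = 0" .
qed

lemma Dp_exists: "degree p \<le> d \<Longrightarrow> \<exists>q. degree q \<le> Suc d \<and> Dp q = p"
proof (induction d arbitrary: p)
  case 0
  have p: "p = [:coeff p 0:]" using degree_0_id[of p] 0 by simp
  show ?case
    by (rule exI[of _ "[:0,coeff p 0:]"]) (subst (3) p, simp add: Dp_def pcompose_pCons)
next
  case (Suc d)
  define r where "r = monom (coeff p (Suc d) / of_nat (Suc (Suc d))) (Suc (Suc d))"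
  have dr: "degree r \<le> Suc (Suc d)" by (simp add: r_def degree_monom_le)
  have "degree (p - Dp r) \<le> Suc d" 
    using degree_Dp_lt[OF dr] Suc.prems by (intro degree_diff_le) auto
  moreover have "coeff (p - Dp r) (Suc d) = 0"
    using coeff_Dp_top[OF dr] by (simp add: r_def)
  ultimately have "degree (p - Dp r) \<le> d"
  proof (intro degree_le allI impI)
    fix i assume i: "d < i" and dd: "degree (p - Dp r) \<le> Suc d" and cc: "coeff (p - Dp r) (Suc d) = 0"
    show "coeff (p - Dp r) i = 0"
    proof (cases "i = Suc d")
      case True with cc show ?thesis by simp
    next
      case False hence "degree (p - Dp r) < i" using i dd by linarith
      thus ?thesis by (rule coeff_eq_0)
    qed
  qed
  then obtain q' where q': "degree q' \<le> Suc d" "Dp q' = p - Dp r" using Suc.IH by blast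
  show ?case
    by (rule exI[of _ "r + q'"]) (use q' dr in \<open>auto simp: Dp_linear intro: degree_add_le\<close>)
qed


lemma antider:
  fixes p :: "rat poly" and f :: "nat \<Rightarrow> rat"
  assumes dp: "degree p \<le> Suc d" and f0: "f 0 = 0"
    and fS: "\<And>j. f (Suc j) = f j + poly p (of_nat j)"
  shows "\<exists>S. degree S \<le> Suc (Suc d) \<and> (\<forall>j. f j = poly S (of_nat j))
     \<and> coeff S (Suc (Suc d)) = coeff p (Suc d) / of_nat (Suc (Suc d))
     \<and> coeff S (Suc d) = coeff p d / of_nat (Suc d) - coeff p (Suc d) / 2"
proof -
  obtain q where q: "degree q \<le> Suc (Suc d)" "Dp q = p" using Dp_exists[OF dp] by blast
  define S where "S = q - [:poly q 0:]"
  have dS: "degree S \<le> Suc (Suc d)" unfolding S_def by (rule degree_diff_le) (use q in auto)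
  have cS: "coeff S (Suc n) = coeff q (Suc n)" for n by (simp add: S_def)
  have pS: "poly S (x + 1) = poly S x + poly p x" for x
    using poly_Dp[of q x] q(2) by (simp add: S_def)
  have fj: "f j = poly S (of_nat j)" for j
  proof (induction j)
    case 0 then show ?case using f0 by (simp add: S_def)
  next
    case (Suc j) then show ?case using fS[of j] pS[of "of_nat j"] by (simp add: add.commute)
  qed
  have t: "coeff p (Suc d) = of_nat (Suc (Suc d)) * coeff q (Suc (Suc d))"
    using coeff_Dp_top[OF q(1)] q(2) by simp
  have s: "coeff p d = of_nat (Suc d) * coeff q (Suc d) + of_nat (Suc (Suc d) choose 2) * coeff q (Suc (Suc d))"
    using coeff_Dp_second[OF q(1)] q(2) by simp
  have "2 * (Suc (Suc d) choose 2) = Suc (Suc d) * Suc d"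
    by (induction d) (auto simp: numeral_2_eq_2)
  then have "rat_of_nat (2 * (Suc (Suc d) choose 2)) = of_nat (Suc (Suc d) * Suc d)" by simp
  then have ch2: "rat_of_nat (Suc (Suc d) choose 2) = of_nat (Suc (Suc d)) * of_nat (Suc d) / 2"
    by (simp only: of_nat_mult)
  show ?thesis
    apply (rule exI[of _ S])
    using dS fj cS t s ch2 by (auto simp: field_simps)
qed



lemma sigma_0 [simp]: "sigma 0 j = 1"
proof -
  have "{S. S \<subseteq> {1..<j} \<and> card S = 0} = {{}}"
    by (auto dest: finite_subset[OF _ finite_atLeastLessThan])
  thus ?thesis by (simp add: sigma_def)
qed

lemma sigma_Suc_0 [simp]: "sigma (Suc k) 0 = 0"
proof -
  have "{S. S \<subseteq> {1..<(0::nat)} \<and> card S = Suc k} = {}" by auto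
  thus ?thesis by (simp add: sigma_def)
qed

lemma sum_subsets_insert:
  fixes A :: "nat set"
  assumes "finite A" "x \<notin> A"
  shows "(\<Sum>S\<in>{S. S \<subseteq> insert x A \<and> card S = Suc k}. \<Prod>n\<in>S. (of_nat n::rat)) =
         (\<Sum>S\<in>{S. S \<subseteq> A \<and> card S = Suc k}. \<Prod>n\<in>S. of_nat n) +
         of_nat x * (\<Sum>S\<in>{S. S \<subseteq> A \<and> card S = k}. \<Prod>n\<in>S. of_nat n)"
proof -
  let ?P = "\<lambda>k. {S. S \<subseteq> A \<and> card S = k}"
  have fin: "finite (?P k)" for k using assms(1) by (auto intro: finite_subset[of _ "Pow A"])
  have eq: "{S. S \<subseteq> insert x A \<and> card S = Suc k} = ?P (Suc k) \<union> insert x ` ?P k"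
  proof (intro equalityI subsetI)
    fix S assume S: "S \<in> {S. S \<subseteq> insert x A \<and> card S = Suc k}"
    show "S \<in> ?P (Suc k) \<union> insert x ` ?P k"
    proof (cases "x \<in> S")
      case True
      have "S - {x} \<subseteq> A" using S by auto
      moreover have "finite S" using S assms(1) by (auto intro: finite_subset)
      ultimately have "S - {x} \<in> ?P k" using S True by (auto simp: card_Diff_singleton)
      moreover have "S = insert x (S - {x})" using True by auto
      ultimately show ?thesis by blast
    next
      case False thus ?thesis using S by auto
    qed
  next
    fix S assume "S \<in> ?P (Suc k) \<union> insert x ` ?P k"
    thus "S \<in> {S. S \<subseteq> insert x A \<and> card S = Suc k}"
    proof
      assume "S \<in> insert x ` ?P k"
      then obtain T where T: "T \<in> ?P k" "S = insert x T" by blast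
      have "finite T" using T assms(1) by (auto intro: finite_subset)
      thus ?thesis using T assms(2) by (auto simp: card_insert_if)
    qed auto
  qed
  have disj: "?P (Suc k) \<inter> insert x ` ?P k = {}" using assms(2) by auto
  have inj: "inj_on (insert x) (?P k)"
  proof (rule inj_onI)
    fix a b assume ab: "a \<in> ?P k" "b \<in> ?P k" "insert x a = insert x b"
    have "x \<notin> a" "x \<notin> b" using ab(1,2) assms(2) by blast+
    have "a = insert x a - {x}" using \<open>x \<notin> a\<close> by simp
    also have "\<dots> = insert x b - {x}" using ab(3) by simp
    also have "\<dots> = b" using \<open>x \<notin> b\<close> by simp
    finally show "a = b" .
  qed
  have "(\<Sum>S\<in>insert x ` ?P k. \<Prod>n\<in>S. (of_nat n::rat)) = (\<Sum>T\<in>?P k. \<Prod>n\<in>insert x T. of_nat n)"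
    by (rule sum.reindex[OF inj, unfolded comp_def])
  also have "\<dots> = (\<Sum>T\<in>?P k. of_nat x * (\<Prod>n\<in>T. of_nat n))"
  proof (rule sum.cong)
    fix T assume "T \<in> ?P k"
    hence "finite T" "x \<notin> T" using assms by (auto intro: finite_subset)
    thus "(\<Prod>n\<in>insert x T. (of_nat n::rat)) = of_nat x * (\<Prod>n\<in>T. of_nat n)" by simp
  qed simp
  also have "\<dots> = of_nat x * (\<Sum>T\<in>?P k. \<Prod>n\<in>T. of_nat n)"
    by (simp add: sum_distrib_left)
  finally have *: "(\<Sum>S\<in>insert x ` ?P k. \<Prod>n\<in>S. (of_nat n::rat)) = of_nat x * (\<Sum>T\<in>?P k. \<Prod>n\<in>T. of_nat n)" .
  have "(\<Sum>S\<in>?P (Suc k) \<union> insert x ` ?P k. \<Prod>n\<in>S. (of_nat n::rat)) =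
     (\<Sum>S\<in>?P (Suc k). \<Prod>n\<in>S. (of_nat n::rat)) + (\<Sum>S\<in>insert x ` ?P k. \<Prod>n\<in>S. (of_nat n::rat))"
    by (rule sum.union_disjoint) (use fin disj in auto)
  then show ?thesis unfolding eq * .
qed

lemma sigma_Suc_Suc: "sigma (Suc k) (Suc j) = sigma (Suc k) j + of_nat j * sigma k j"
proof (cases "j = 0")
  case True thus ?thesis by (simp add: sigma_def)
next
  case False
  hence "{1..<Suc j} = insert j {1..<j}" by auto
  thus ?thesis unfolding sigma_def by (simp add: sum_subsets_insert)
qed

definition F :: "nat \<Rightarrow> rat fps" where "F j = Abs_fps (\<lambda>i. sigma i j)"
definition G :: "nat \<Rightarrow> rat fps" where "G j = Abs_fps (\<lambda>i. Q i j)"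

lemma FG: "F j * G j = 1"
proof (rule fps_ext)
  fix n show "fps_nth (F j * G j) n = fps_nth (1::rat fps) n"
  proof (cases n)
    case 0 thus ?thesis by (simp add: F_def G_def fps_mult_nth)
  next
    case (Suc m)
    have "fps_nth (F j * G j) n = (\<Sum>i=0..Suc m. sigma i j * Q (Suc m - i) j)"
      by (simp add: F_def G_def fps_mult_nth Suc)
    also have "\<dots> = Q (Suc m) j + (\<Sum>i=Suc 0..Suc m. sigma i j * Q (Suc m - i) j)"
      by (subst sum.atLeast_Suc_atMost) simp_all
    also have "\<dots> = 0" by simp
    finally show ?thesis using Suc by simp
  qed
qed

lemma F_Suc: "F (Suc j) = (1 + fps_const (of_nat j) * fps_X) * F j"
proof (rule fps_ext)
  fix n show "fps_nth (F (Suc j)) n = fps_nth ((1 + fps_const (of_nat j) * fps_X) * F j) n"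
    by (cases n) (simp_all add: F_def distrib_right sigma_Suc_Suc mult.assoc fps_X_mult_nth)
qed

lemma F_0: "F 0 = 1"
proof (rule fps_ext)
  fix n show "fps_nth (F 0) n = fps_nth 1 n" by (cases n) (simp_all add: F_def)
qed

lemma F_nz: "F j \<noteq> 0"
proof
  assume "F j = 0" hence "fps_nth (F j) 0 = 0" by simp
  thus False by (simp add: F_def)
qed

lemma G_Suc: "(1 + fps_const (of_nat j) * fps_X) * G (Suc j) = G j"
proof -
  have "F j * ((1 + fps_const (of_nat j) * fps_X) * G (Suc j)) = F j * G j"
  proof -
    have "F j * ((1 + fps_const (of_nat j) * fps_X) * G (Suc j)) = F (Suc j) * G (Suc j)"
      unfolding F_Suc by (metis mult.assoc mult.commute)
    also have "\<dots> = F j * G j" by (simp only: FG)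
    finally show ?thesis .
  qed
  thus ?thesis using F_nz by simp
qed

lemma Q_Suc_Suc: "Q (Suc k) (Suc j) = Q (Suc k) j - of_nat j * Q k (Suc j)"
proof -
  have "fps_nth ((1 + fps_const (of_nat j) * fps_X) * G (Suc j)) (Suc k) = fps_nth (G j) (Suc k)"
    using G_Suc by simp
  thus ?thesis by (simp add: G_def distrib_right mult.assoc fps_X_mult_nth)
qed

lemma Q_Suc_0: "Q (Suc k) 0 = 0"
proof -
  have "G 0 = 1" using FG[of 0] by (simp add: F_0)
  hence "fps_nth (G 0) (Suc k) = 0" by simp
  thus ?thesis by (simp add: G_def)
qed



lemma shift_top:
  fixes P :: "rat poly"
  assumes "degree P \<le> Suc d"
  shows "coeff (pcompose P [:1,1:]) (Suc d) = coeff P (Suc d)"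
    "coeff (pcompose P [:1,1:]) d = coeff P d + of_nat (Suc d) * coeff P (Suc d)"
proof -
  have a: "degree P \<le> Suc (Suc d)" using assms by simp
  have "coeff (Dp P) (Suc d) = of_nat (Suc (Suc d)) * coeff P (Suc (Suc d))"
    by (rule coeff_Dp_top[OF a])
  also have "coeff P (Suc (Suc d)) = 0" using assms by (intro coeff_eq_0) simp
  finally show "coeff (pcompose P [:1,1:]) (Suc d) = coeff P (Suc d)" by (simp add: Dp_def)
  show "coeff (pcompose P [:1,1:]) d = coeff P d + of_nat (Suc d) * coeff P (Suc d)"
    using coeff_Dp_top[OF assms] by (simp add: Dp_def)
qed

lemma top2:
  fixes S :: "rat poly"
  assumes "degree S \<le> 2*k" "k \<ge> 1"
  shows "\<exists>p. degree p \<le> 2*k - 2 \<and> (\<forall>x. poly S x = coeff S (2*k) * x^(2*k) + coeff S (2*k-1) * x^(2*k-1) + poly p x)"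
proof -
  define p where "p = S - monom (coeff S (2*k)) (2*k) - monom (coeff S (2*k-1)) (2*k-1)"
  have "degree p \<le> 2*k - 2"
  proof (rule degree_le, intro allI impI)
    fix i assume i: "2*k - 2 < i"
    show "coeff p i = 0"
    proof (cases "i \<le> 2*k")
      case True
      hence "i = 2*k \<or> i = 2*k - 1" using i assms(2) by linarith
      thus ?thesis using assms(2) by (auto simp: p_def coeff_monom)
    next
      case False
      thus ?thesis using assms(1) by (auto simp: p_def coeff_monom coeff_eq_0)
    qed
  qed
  moreover have "poly S x = coeff S (2*k) * x^(2*k) + coeff S (2*k-1) * x^(2*k-1) + poly p x" for x
    by (simp add: p_def poly_monom)
  ultimately show ?thesis by blast
qed

lemma genA: fixes F T y s :: rat assumes "F > 0" "T > 0" "y > 0"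
  shows "s / ((2*T) * (y*F)) / (2*(y+1)) = s / ((2*(2*T)) * ((y+1)*(y*F)))"
proof -
  define b where "b = y + 1"
  have "b > 0" using assms by (simp add: b_def)
  thus ?thesis unfolding b_def[symmetric] using assms by (simp add: field_simps)
qed

lemma genB: fixes F T y :: rat assumes "F > 0" "T > 0" "y > 0"
  shows "- ((2*y+1) / (3 * (2*T) * F)) / (2*y+1) - 1 / ((2*T) * (y*F)) / 2
     = - ((2*y+3) / (3 * (2*(2*T)) * (y*F)))"
proof -
  define a where "a = 2*y+1"
  have "a > 0" using assms by (simp add: a_def)
  have "(2*y+3) = a + 2" by (simp add: a_def)
  thus ?thesis unfolding a_def[symmetric] using assms \<open>a > 0\<close> by (simp add: field_simps)
qed

lemma genD: fixes F T y s :: rat assumes "F > 0" "T > 0" "y > 0"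
  shows "- (s * (2*y - 5) / (3 * (2*T) * F) + (2*y) * (s / ((2*T) * (y*F)))) / (2*y+1)
     - - (s / ((2*T) * (y*F))) / 2
   = (-s) * (2 * (y+1) - 5) / (3 * (2*(2*T)) * (y*F))"
proof -
  define a where "a = 2*y+1"
  have "a > 0" using assms by (simp add: a_def)
  show ?thesis unfolding a_def[symmetric] using assms \<open>a > 0\<close> by (simp add: field_simps) (simp add: a_def algebra_simps)
qed

lemma numA: "(1::rat) / (2^(Suc n) * fact (Suc n)) / of_nat (Suc (Suc (2 * Suc n)))
   = 1 / (2^(Suc (Suc n)) * fact (Suc (Suc n)))"
proof -
  define y where "y = (of_nat n + 1::rat)"
  have e: "(fact (Suc n)::rat) = y * fact n" "(fact (Suc (Suc n))::rat) = (y+1) * (y * fact n)"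
    "(of_nat (Suc (Suc (2 * Suc n)))::rat) = 2*(y+1)" "(2::rat)^(Suc n) = 2 * 2^n" "(2::rat)^(Suc (Suc n)) = 2*(2*2^n)"
    by (simp_all add: y_def algebra_simps)
  show ?thesis unfolding e by (rule genA) (auto simp: y_def)
qed

lemma numB: "- (of_nat (2 * Suc n + 1) / (3 * 2^(Suc n) * fact n)) / of_nat (Suc (2 * Suc n))
     - (1::rat) / (2^(Suc n) * fact (Suc n)) / 2
   = - (of_nat (2 * Suc (Suc n) + 1) / (3 * 2^(Suc (Suc n)) * fact (Suc n)))"
proof -
  define y where "y = (of_nat n + 1::rat)"
  have e: "(fact (Suc n)::rat) = y * fact n"
    "(of_nat (2 * Suc n + 1)::rat) = 2*y+1" "(of_nat (Suc (2 * Suc n))::rat) = 2*y+1"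
    "(of_nat (2 * Suc (Suc n) + 1)::rat) = 2*y+3"
    "(2::rat)^(Suc n) = 2 * 2^n" "(2::rat)^(Suc (Suc n)) = 2*(2*2^n)"
    by (simp_all add: y_def algebra_simps)
  show ?thesis unfolding e by (rule genB) (auto simp: y_def)
qed

lemma numC: "- ((-1::rat)^(Suc n) / (2^(Suc n) * fact (Suc n))) / of_nat (Suc (Suc (2 * Suc n)))
   = (-1)^(Suc (Suc n)) / (2^(Suc (Suc n)) * fact (Suc (Suc n)))"
proof -
  define y where "y = (of_nat n + 1::rat)"
  have e: "(fact (Suc n)::rat) = y * fact n" "(fact (Suc (Suc n))::rat) = (y+1) * (y * fact n)"
    "(of_nat (Suc (Suc (2 * Suc n)))::rat) = 2*(y+1)" "(2::rat)^(Suc n) = 2 * 2^n" "(2::rat)^(Suc (Suc n)) = 2*(2*2^n)"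
    "(-1::rat)^(Suc (Suc n)) = - ((-1)^(Suc n))"
    by (simp_all add: y_def algebra_simps)
  have "- ((-1::rat)^(Suc n) / (2 * 2^n * (y * fact n))) / (2*(y+1)) = (- ((-1)^(Suc n))) / (2*(2*2^n) * ((y+1) * (y * fact n)))"
    using genA[of "fact n" "2^n" y "- ((-1::rat)^(Suc n))"] by (simp add: y_def)
  thus ?thesis unfolding e .
qed

lemma numD: "- ((-1)^(Suc n) * (2 * of_nat (Suc n) - 5) / (3 * 2^(Suc n) * fact n)
       + of_nat (Suc (Suc (2*n))) * ((-1::rat)^(Suc n) / (2^(Suc n) * fact (Suc n)))) / of_nat (Suc (2 * Suc n))
     - - ((-1::rat)^(Suc n) / (2^(Suc n) * fact (Suc n))) / 2
   = (-1)^(Suc (Suc n)) * (2 * of_nat (Suc (Suc n)) - 5) / (3 * 2^(Suc (Suc n)) * fact (Suc n))"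
proof -
  define y where "y = (of_nat n + 1::rat)"
  define s where "s = (-1::rat)^(Suc n)"
  have e: "(fact (Suc n)::rat) = y * fact n"
    "(of_nat (Suc (2 * Suc n))::rat) = 2*y+1" "(of_nat (Suc (Suc (2*n)))::rat) = 2*y"
    "2 * (of_nat (Suc n)::rat) = 2*y" "2 * (of_nat (Suc (Suc n))::rat) = 2*(y+1)"
    "(2::rat)^(Suc n) = 2 * 2^n" "(2::rat)^(Suc (Suc n)) = 2*(2*2^n)"
    "(-1::rat)^(Suc (Suc n)) = - s" "(-1::rat)^(Suc n) = s"
    by (simp_all add: y_def s_def algebra_simps)
  have "- (s * (2*y - 5) / (3 * (2*2^n) * fact n) + (2*y) * (s / ((2*2^n) * (y*fact n)))) / (2*y+1)
     - - (s / ((2*2^n) * (y*fact n))) / 2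
   = (-s) * (2 * (y+1) - 5) / (3 * (2*(2*2^n)) * (y*fact n))"
    using genD[of "fact n" "2^n" y s] by (simp add: y_def)
  thus ?thesis unfolding e by (simp add: mult.assoc)
qed



lemma sigma_poly: "\<exists>S. degree S \<le> 2*Suc n \<and> (\<forall>j. sigma (Suc n) j = poly S (of_nat j))
   \<and> coeff S (2*Suc n) = 1/(2^Suc n * fact (Suc n))
   \<and> coeff S (2*Suc n - 1) = - (of_nat (2*Suc n+1)/(3*2^Suc n * fact n))"
proof (induction n)
  case 0
  have "\<exists>S. degree S \<le> Suc (Suc 0) \<and> (\<forall>j. sigma (Suc 0) j = poly S (of_nat j))
     \<and> coeff S (Suc (Suc 0)) = coeff [:0,1:] (Suc 0) / of_nat (Suc (Suc 0))
     \<and> coeff S (Suc 0) = coeff [:0,1:] 0 / of_nat (Suc 0) - coeff [:0,1::rat:] (Suc 0) / 2"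
    by (rule antider) (simp_all add: sigma_Suc_Suc)
  then obtain S where S: "degree S \<le> Suc (Suc 0)" "\<forall>j. sigma (Suc 0) j = poly S (of_nat j)"
     "coeff S (Suc (Suc 0)) = coeff [:0,1:] (Suc 0) / of_nat (Suc (Suc 0))"
     "coeff S (Suc 0) = coeff [:0,1:] 0 / of_nat (Suc 0) - coeff [:0,1::rat:] (Suc 0) / 2" by blast
  show ?case by (rule exI[of _ S]) (use S in \<open>simp add: numeral_2_eq_2\<close>)
next
  case (Suc n)
  then obtain S where S: "degree S \<le> 2*Suc n" "\<forall>j. sigma (Suc n) j = poly S (of_nat j)"
     "coeff S (2*Suc n) = 1/(2^Suc n * fact (Suc n))"
     "coeff S (2*Suc n - 1) = - (of_nat (2*Suc n+1)/(3*2^Suc n * fact n))" by blast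
  define d where "d = 2 * Suc n"
  define p where "p = pCons 0 S"
  have dp: "degree p \<le> Suc d" unfolding p_def d_def
    using degree_pCons_le[of 0 S] S(1) by linarith
  have "\<exists>S'. degree S' \<le> Suc (Suc d) \<and> (\<forall>j. sigma (Suc (Suc n)) j = poly S' (of_nat j))
     \<and> coeff S' (Suc (Suc d)) = coeff p (Suc d) / of_nat (Suc (Suc d))
     \<and> coeff S' (Suc d) = coeff p d / of_nat (Suc d) - coeff p (Suc d) / 2"
    by (rule antider[OF dp]) (use S(2) in \<open>simp_all add: sigma_Suc_Suc p_def\<close>)
  then obtain S' where S': "degree S' \<le> Suc (Suc d)" "\<forall>j. sigma (Suc (Suc n)) j = poly S' (of_nat j)"
     "coeff S' (Suc (Suc d)) = coeff p (Suc d) / of_nat (Suc (Suc d))"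
     "coeff S' (Suc d) = coeff p d / of_nat (Suc d) - coeff p (Suc d) / 2" by blast
  have c1: "coeff p (Suc d) = 1/(2^Suc n * fact (Suc n))" using S(3) by (simp add: p_def d_def)
  have dd: "d = Suc (2 * Suc n - 1)" by (simp add: d_def)
  have c2: "coeff p d = - (of_nat (2*Suc n+1)/(3*2^Suc n * fact n))"
    using S(4) by (subst dd) (simp add: p_def)
  have i1: "2 * Suc (Suc n) = Suc (Suc d)" "2 * Suc (Suc n) - 1 = Suc d" by (simp_all add: d_def)
  show ?case
    unfolding i1(2) unfolding i1(1)
  proof (intro exI[of _ S'] conjI)
    show "coeff S' (Suc (Suc d)) = 1 / (2 ^ Suc (Suc n) * fact (Suc (Suc n)))"
      unfolding S'(3) c1 unfolding d_def by (rule numA)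
    show "coeff S' (Suc d) = - (of_nat (Suc (Suc d) + 1) / (3 * 2 ^ Suc (Suc n) * fact (Suc n)))"
      unfolding S'(4) c1 c2 i1(1)[symmetric] unfolding d_def by (rule numB)
  qed (use S' in auto)
qed

lemma Q_poly: "\<exists>S. degree S \<le> 2*Suc n \<and> (\<forall>j. Q (Suc n) j = poly S (of_nat j))
   \<and> coeff S (2*Suc n) = (-1)^Suc n/(2^Suc n * fact (Suc n))
   \<and> coeff S (2*Suc n - 1) = (-1)^Suc n * (2 * of_nat (Suc n) - 5) / (3*2^Suc n * fact n)"
proof (induction n)
  case 0
  have "\<exists>S. degree S \<le> Suc (Suc 0) \<and> (\<forall>j. Q (Suc 0) j = poly S (of_nat j))
     \<and> coeff S (Suc (Suc 0)) = coeff [:0,-1:] (Suc 0) / of_nat (Suc (Suc 0))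
     \<and> coeff S (Suc 0) = coeff [:0,-1:] 0 / of_nat (Suc 0) - coeff [:0,-1::rat:] (Suc 0) / 2"
    by (rule antider) (simp_all add: Q_Suc_Suc Q_Suc_0 del: Q.simps(2))
  then obtain S where S: "degree S \<le> Suc (Suc 0)" "\<forall>j. Q (Suc 0) j = poly S (of_nat j)"
     "coeff S (Suc (Suc 0)) = coeff [:0,-1:] (Suc 0) / of_nat (Suc (Suc 0))"
     "coeff S (Suc 0) = coeff [:0,-1:] 0 / of_nat (Suc 0) - coeff [:0,-1::rat:] (Suc 0) / 2" by blast
  show ?case by (rule exI[of _ S]) (use S in \<open>simp add: numeral_2_eq_2 del: Q.simps(2)\<close>)
next
  case (Suc n)
  then obtain S where S: "degree S \<le> 2*Suc n" "\<forall>j. Q (Suc n) j = poly S (of_nat j)"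
     "coeff S (2*Suc n) = (-1)^Suc n/(2^Suc n * fact (Suc n))"
     "coeff S (2*Suc n - 1) = (-1)^Suc n * (2 * of_nat (Suc n) - 5) / (3*2^Suc n * fact n)" by blast
  define d where "d = 2 * Suc n"
  define p where "p = - pCons 0 (pcompose S [:1,1:])"
  have dS: "degree S \<le> Suc (Suc (2*n))" using S(1) by simp
  have dp: "degree p \<le> Suc d" unfolding p_def d_def
    using degree_pCons_le[of 0 "pcompose S [:1,1:]"] degree_shift_le[of S] S(1) by simp
  have "\<exists>S'. degree S' \<le> Suc (Suc d) \<and> (\<forall>j. Q (Suc (Suc n)) j = poly S' (of_nat j))
     \<and> coeff S' (Suc (Suc d)) = coeff p (Suc d) / of_nat (Suc (Suc d))
     \<and> coeff S' (Suc d) = coeff p d / of_nat (Suc d) - coeff p (Suc d) / 2"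
  proof (rule antider[OF dp])
    show "Q (Suc (Suc n)) 0 = 0" by (rule Q_Suc_0)
    fix j
    have e1: "Q (Suc (Suc n)) (Suc j) = Q (Suc (Suc n)) j - of_nat j * Q (Suc n) (Suc j)" by (rule Q_Suc_Suc)
    have e2: "Q (Suc n) (Suc j) = poly S (of_nat (Suc j))" using S(2) by blast
    have e3: "poly p (of_nat j) = - (of_nat j * poly S (of_nat (Suc j)))"
      by (simp add: p_def poly_pcompose add.commute)
    show "Q (Suc (Suc n)) (Suc j) = Q (Suc (Suc n)) j + poly p (of_nat j)"
      unfolding e1 e2 e3 by simp
  qed
  then obtain S' where S': "degree S' \<le> Suc (Suc d)" "\<forall>j. Q (Suc (Suc n)) j = poly S' (of_nat j)"
     "coeff S' (Suc (Suc d)) = coeff p (Suc d) / of_nat (Suc (Suc d))"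
     "coeff S' (Suc d) = coeff p d / of_nat (Suc d) - coeff p (Suc d) / 2" by blast
  have c1: "coeff p (Suc d) = - ((-1)^Suc n/(2^Suc n * fact (Suc n)))"
    using shift_top(1)[OF dS] S(3) by (simp add: p_def d_def)
  have c2: "coeff p d = - ((-1)^Suc n * (2 * of_nat (Suc n) - 5) / (3*2^Suc n * fact n)
       + of_nat (Suc (Suc (2*n))) * ((-1::rat)^(Suc n) / (2^(Suc n) * fact (Suc n))))"
  proof -
    have "coeff p d = - coeff (pcompose S [:1,1:]) (Suc (2*n))" by (simp add: p_def d_def)
    also have "\<dots> = - (coeff S (Suc (2*n)) + of_nat (Suc (Suc (2*n))) * coeff S (Suc (Suc (2*n))))"
      using shift_top(2)[OF dS] by simp
    finally show ?thesis using S(3,4) by simp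
  qed
  have i1: "2 * Suc (Suc n) = Suc (Suc d)" "2 * Suc (Suc n) - 1 = Suc d" by (simp_all add: d_def)
  show ?case
    unfolding i1(2) unfolding i1(1)
  proof (intro exI[of _ S'] conjI)
    show "coeff S' (Suc (Suc d)) = (-1)^Suc (Suc n) / (2 ^ Suc (Suc n) * fact (Suc (Suc n)))"
      unfolding S'(3) c1 unfolding d_def by (rule numC)
    show "coeff S' (Suc d) = (-1)^Suc (Suc n) * (2 * of_nat (Suc (Suc n)) - 5) / (3 * 2 ^ Suc (Suc n) * fact (Suc n))"
      unfolding S'(4) c1 c2 unfolding d_def by (rule numD)
  qed (use S' in auto)
qed


theorem lemma2p7:
  fixes k :: nat
  assumes "k \<ge> 1"
  shows "(\<exists>p :: rat poly. degree p \<le> 2*k - 2 \<and>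
            (\<forall>j::nat. j \<ge> 1 \<longrightarrow>
               sigma k j = 1 / (2^k * fact k) * of_nat j ^ (2*k)
                 - of_nat (2*k + 1) / (3 * 2^k * fact (k - 1)) * of_nat j ^ (2*k - 1)
                 + poly p (of_nat j)))
       \<and> (\<exists>p :: rat poly. degree p \<le> 2*k - 2 \<and>
            (\<forall>j::nat. j \<ge> 1 \<longrightarrow>
               Q k j = (-1)^k / (2^k * fact k) * of_nat j ^ (2*k)
                 + (-1)^k * (2 * of_nat k - 5) / (3 * 2^k * fact (k - 1)) * of_nat j ^ (2*k - 1)
                 + poly p (of_nat j)))"
proof -
  obtain n where k: "k = Suc n" using assms by (cases k) auto
  obtain S where S: "degree S \<le> 2*k" "\<forall>j. sigma k j = poly S (of_nat j)"
    "coeff S (2*k) = 1/(2^k * fact k)"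
    "coeff S (2*k-1) = - (of_nat (2*k+1)/(3*2^k * fact (k-1)))"
    using sigma_poly[of n] unfolding k by auto
  obtain p where p: "degree p \<le> 2*k - 2"
    "\<forall>x. poly S x = coeff S (2*k) * x^(2*k) + coeff S (2*k-1) * x^(2*k-1) + poly p x"
    using top2[OF S(1) assms] by blast
  obtain R where R: "degree R \<le> 2*k" "\<forall>j. Q k j = poly R (of_nat j)"
    "coeff R (2*k) = (-1)^k/(2^k * fact k)"
    "coeff R (2*k-1) = (-1)^k * (2 * of_nat k - 5) / (3*2^k * fact (k-1))"
    using Q_poly[of n] unfolding k by auto
  obtain r where r: "degree r \<le> 2*k - 2"
    "\<forall>x. poly R x = coeff R (2*k) * x^(2*k) + coeff R (2*k-1) * x^(2*k-1) + poly r x"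
    using top2[OF R(1) assms] by blast
  show ?thesis
  proof (intro conjI)
    show "\<exists>p :: rat poly. degree p \<le> 2*k - 2 \<and>
            (\<forall>j::nat. j \<ge> 1 \<longrightarrow>
               sigma k j = 1 / (2^k * fact k) * of_nat j ^ (2*k)
                 - of_nat (2*k + 1) / (3 * 2^k * fact (k - 1)) * of_nat j ^ (2*k - 1)
                 + poly p (of_nat j))"
    proof (intro exI[of _ p] conjI allI impI)
      fix j :: nat
      show "sigma k j = 1 / (2^k * fact k) * of_nat j ^ (2*k)
                 - of_nat (2*k + 1) / (3 * 2^k * fact (k - 1)) * of_nat j ^ (2*k - 1)
                 + poly p (of_nat j)"
        using S(2) p(2) unfolding S(3) S(4) by simp
    qed (use p in auto)
    show "\<exists>p :: rat poly. degree p \<le> 2*k - 2 \<and>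
            (\<forall>j::nat. j \<ge> 1 \<longrightarrow>
               Q k j = (-1)^k / (2^k * fact k) * of_nat j ^ (2*k)
                 + (-1)^k * (2 * of_nat k - 5) / (3 * 2^k * fact (k - 1)) * of_nat j ^ (2*k - 1)
                 + poly p (of_nat j))"
    proof (intro exI[of _ r] conjI allI impI)
      fix j :: nat
      show "Q k j = (-1)^k / (2^k * fact k) * of_nat j ^ (2*k)
                 + (-1)^k * (2 * of_nat k - 5) / (3 * 2^k * fact (k - 1)) * of_nat j ^ (2*k - 1)
                 + poly r (of_nat j)"
        using R(2) r(2) unfolding R(3) R(4) by simp
    qed (use r in auto)
  qed
qed

end
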